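(* Let $\mathbf d=(d_1\ge\cdots\ge d_n)$ be a weakly decreasing sequence of nonnegative integers and $\mathbf x^{\mathbf d}=x_1^{d_1}\cdots x_n^{d_n}$. If $w\in\mathfrak S_n$ satisfies $\mathrm{Des}(w)\subseteq\mathrm{Des}(\mathbf d)$, then the leading term of $\overline\pi_w(\mathbf x^{\mathbf d})$ with respect to neglex is the monomial $w(\mathbf x^{\mathbf d})=x_{w(1)}^{d_1}\cdots x_{w(n)}^{d_n}$.
   Context: $H_n(0)$ acts on $\mathbb F[x_1,\dots,x_n]$ ($\mathbb F$ any field) via isobaric Demazure operators $\pi_i(f)=\frac{x_if-x_{i+1}s_i(f)}{x_i-x_{i+1}}$, where $s_i$ swaps $x_i$ and $x_{i+1}$. $\overline\pi_i=\pi_i-1$, i.e. $\overline\pi_i(f)=\frac{x_{i+1}(f-s_i(f))}{x_i-x_{i+1}}$, and $\overline\pi_w=\overline\pi_{i_1}\cdots\overline\pi_{i_\ell}$ for any reduced expression $w=s_{i_1}\cdots s_{i_\ell}$. A permutation acts on polynomials by $x_i\mapsto x_{w(i)}$. For an integer sequence $\mathbf i$, $\mathrm{Des}(\mathbf i)=\{j: i_j>i_{j+1}\}$; for $w\in\mathfrak S_n$, $\mathrm{Des}(w)=\{j:w(j)>w(j+1)\}$. Neglex is the lexicographic term order with $x_n>\cdots>x_1$. *)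

theory Defs
  imports "HOL-Library.Poly_Mapping" "HOL-Combinatorics.Permutations"
begin

(* Multivariate polynomials over a field 'a in variables x_1, x_2, ...:
   a monomial is an exponent vector (nat \<Rightarrow>\<^sub>0 nat), variable index i \<mapsto> exponent;
   a polynomial maps monomials to coefficients (finite support). *)
type_synonym 'a mpoly = "(nat \<Rightarrow>\<^sub>0 nat) \<Rightarrow>\<^sub>0 'a"

definition var :: "nat \<Rightarrow> 'a::field mpoly" where
  "var i = Poly_Mapping.single (Poly_Mapping.single i 1) 1"

definition xpow :: "nat \<Rightarrow> (nat \<Rightarrow> nat) \<Rightarrow> 'a::field mpoly" where
  "xpow n d = (\<Prod>i\<in>{1..n}. var i ^ d i)"

definition perm_mono :: "(nat \<Rightarrow> nat) \<Rightarrow> (nat \<Rightarrow>\<^sub>0 nat) \<Rightarrow> (nat \<Rightarrow>\<^sub>0 nat)" where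
  "perm_mono w m = (\<Sum>i\<in>Poly_Mapping.keys m. Poly_Mapping.single (w i) (Poly_Mapping.lookup m i))"

definition perm_poly :: "(nat \<Rightarrow> nat) \<Rightarrow> 'a::field mpoly \<Rightarrow> 'a mpoly" where
  "perm_poly w f = (\<Sum>m\<in>Poly_Mapping.keys f. Poly_Mapping.single (perm_mono w m) (Poly_Mapping.lookup f m))"

definition s :: "nat \<Rightarrow> nat \<Rightarrow> nat" where
  "s i = transpose i (i+1)"

(* \<overline>\<pi>_i f = x_{i+1} (f - s_i f) / (x_i - x_{i+1}); exact division in the polynomial ring *)
definition pibar :: "nat \<Rightarrow> 'a::field mpoly \<Rightarrow> 'a mpoly" where
  "pibar i f = (THE g. (var i - var (i+1)) * g = var (i+1) * (f - perm_poly (s i) f))"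

definition pibar_word :: "nat list \<Rightarrow> 'a::field mpoly \<Rightarrow> 'a mpoly" where
  "pibar_word is = foldr (\<lambda>i g. pibar i \<circ> g) is id"

definition word_perm :: "nat list \<Rightarrow> nat \<Rightarrow> nat" where
  "word_perm is = foldr (\<lambda>i g. s i \<circ> g) is id"

(* Coxeter length of w in S_n = number of inversions *)
definition inv_count :: "nat \<Rightarrow> (nat \<Rightarrow> nat) \<Rightarrow> nat" where
  "inv_count n w = card {(i, j). 1 \<le> i \<and> i < j \<and> j \<le> n \<and> w i > w j}"

definition reduced_word :: "nat \<Rightarrow> (nat \<Rightarrow> nat) \<Rightarrow> nat list \<Rightarrow> bool" where
  "reduced_word n w is \<longleftrightarrow> (\<forall>i\<in>set is. 1 \<le> i \<and> i < n) \<and> word_perm is = w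
      \<and> length is = inv_count n w"

definition Des_seq :: "nat \<Rightarrow> (nat \<Rightarrow> nat) \<Rightarrow> nat set" where
  "Des_seq n d = {j. 1 \<le> j \<and> j < n \<and> d j > d (j+1)}"

definition Des_perm :: "nat \<Rightarrow> (nat \<Rightarrow> nat) \<Rightarrow> nat set" where
  "Des_perm n w = {j. 1 \<le> j \<and> j < n \<and> w j > w (j+1)}"

(* neglex: lex order with x_n > ... > x_1, i.e. compare exponents starting
   from the variable of largest index *)
definition neglex_less :: "(nat \<Rightarrow>\<^sub>0 nat) \<Rightarrow> (nat \<Rightarrow>\<^sub>0 nat) \<Rightarrow> bool" where
  "neglex_less m m' \<longleftrightarrow> (\<exists>k. Poly_Mapping.lookup m k < Poly_Mapping.lookup m' k \<and> (\<forall>j>k. Poly_Mapping.lookup m j = Poly_Mapping.lookup m' j))"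

definition neglex_leading_term :: "'a::field mpoly \<Rightarrow> 'a mpoly" where
  "neglex_leading_term f =
     (THE t. \<exists>m. m \<in> Poly_Mapping.keys f \<and> (\<forall>m'\<in>Poly_Mapping.keys f. m' \<noteq> m \<longrightarrow> neglex_less m' m)
                \<and> t = Poly_Mapping.single m (Poly_Mapping.lookup f m))"

end

theory Submission
  imports Defs
begin


definition rk :: "nat \<Rightarrow> (nat \<Rightarrow> nat) \<Rightarrow> nat \<Rightarrow> nat \<Rightarrow> nat" where
  "rk n x k t = (\<Sum>j\<in>{k..n}. if t \<le> x j then 1 else 0)"

definition Aset :: "nat \<Rightarrow> (nat \<Rightarrow> nat) \<Rightarrow> (nat \<Rightarrow> nat) \<Rightarrow> bool" where
  "Aset n e x \<longleftrightarrow> (\<forall>j. j \<notin> {1..n} \<longrightarrow> x j = 0) \<and> (\<forall>k t. rk n x k t \<le> rk n e k t)"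

definition Sset :: "nat \<Rightarrow> (nat \<Rightarrow> nat) \<Rightarrow> (nat \<Rightarrow> nat) \<Rightarrow> bool" where
  "Sset n e b \<longleftrightarrow> (\<exists>L. L \<noteq> [] \<and> (\<forall>x\<in>set L. Aset n e x) \<and> (\<forall>j. (\<Sum>x\<leftarrow>L. x j) = length L * b j))"

definition nl :: "(nat \<Rightarrow> nat) \<Rightarrow> (nat \<Rightarrow> nat) \<Rightarrow> bool" where
  "nl x y \<longleftrightarrow> (\<exists>k. x k < y k \<and> (\<forall>j>k. x j = y j))"

definition sw :: "nat \<Rightarrow> (nat \<Rightarrow> nat) \<Rightarrow> nat \<Rightarrow> nat" where
  "sw i x = x \<circ> s i"

lemma nl_asym: "nl x y \<Longrightarrow> \<not> nl y x"
  unfolding nl_def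
  by (metis linorder_neqE_nat order_less_asym order_less_irrefl)

lemma nl_irrefl: "\<not> nl x x"
  unfolding nl_def by auto

lemma rk_split: "k \<le> n \<Longrightarrow> rk n x k t = (if t \<le> x k then 1 else 0) + rk n x (Suc k) t"
  unfolding rk_def by (simp add: sum.atLeast_Suc_atMost)

lemma rk_cong: "(\<And>j. j \<ge> k \<Longrightarrow> x j = y j) \<Longrightarrow> rk n x k t = rk n y k t"
  unfolding rk_def by (intro sum.cong) auto

lemma A_le_at:
  assumes A: "Aset n e x" and eq: "\<And>j. j > k \<Longrightarrow> x j = e j" and kn: "k \<le> n"
  shows "x k \<le> e k"
proof (rule ccontr)
  assume "\<not> x k \<le> e k"
  hence lt: "e k < x k" by simp
  have "rk n x k (x k) = 1 + rk n x (Suc k) (x k)" using rk_split[OF kn] by simp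
  moreover have "rk n e k (x k) = rk n e (Suc k) (x k)" using rk_split[OF kn, of e] lt by simp
  moreover have "rk n x (Suc k) (x k) = rk n e (Suc k) (x k)" by (rule rk_cong) (simp add: eq)
  moreover have "rk n x k (x k) \<le> rk n e k (x k)" using A unfolding Aset_def by blast
  ultimately show False by simp
qed

lemma sum_list_strict_mono:
  assumes "\<And>x. x \<in> set L \<Longrightarrow> f x \<le> (g x :: nat)" and "x0 \<in> set L" and "f x0 < g x0"
  shows "(\<Sum>x\<leftarrow>L. f x) < (\<Sum>x\<leftarrow>L. g x)"
  using assms
proof (induction L)
  case Nil then show ?case by simp
next
  case (Cons a L)
  show ?case
  proof (cases "x0 = a")
    case True
    have "(\<Sum>x\<leftarrow>L. f x) \<le> (\<Sum>x\<leftarrow>L. g x)"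
      by (rule sum_list_mono) (use Cons.prems in auto)
    then show ?thesis using True Cons.prems by simp
  next
    case False
    hence "(\<Sum>x\<leftarrow>L. f x) < (\<Sum>x\<leftarrow>L. g x)" using Cons by auto
    moreover have "f a \<le> g a" using Cons.prems by simp
    ultimately show ?thesis by simp
  qed
qed

lemma sum_list_const_fun: "(\<Sum>x\<leftarrow>L. c) = length L * (c::nat)"
  by (induction L) auto

lemma S_nl_aux:
  assumes L: "\<forall>x\<in>set L. Aset n e x" and sumL: "\<forall>j. (\<Sum>x\<leftarrow>L. x j) = length L * b j"
    and esupp: "\<forall>j. j \<notin> {1..n} \<longrightarrow> e j = 0"
    and ex: "\<exists>x\<in>set L. x \<noteq> e"
  shows "nl b e"
proof -
  define D where "D = {j. \<exists>x\<in>set L. x j \<noteq> e j}"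
  have Dsub: "D \<subseteq> {1..n}"
  proof
    fix j assume "j \<in> D"
    then obtain x where x: "x \<in> set L" "x j \<noteq> e j" unfolding D_def by auto
    show "j \<in> {1..n}"
    proof (rule ccontr)
      assume "j \<notin> {1..n}"
      hence "x j = 0" "e j = 0" using L x esupp unfolding Aset_def by auto
      then show False using x by simp
    qed
  qed
  have finD: "finite D" using Dsub finite_subset by blast
  have neD: "D \<noteq> {}" using ex unfolding D_def by (auto simp: fun_eq_iff)
  define K where "K = Max D"
  have KD: "K \<in> D" unfolding K_def using finD neD by simp
  have above: "\<And>x j. x \<in> set L \<Longrightarrow> j > K \<Longrightarrow> x j = e j"
  proof (rule ccontr)
    fix x j assume "x \<in> set L" "j > K" "x j \<noteq> e j"
    hence "j \<in> D" unfolding D_def by auto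
    hence "j \<le> K" unfolding K_def using finD by simp
    with \<open>j > K\<close> show False by simp
  qed
  have Kn: "K \<le> n" using KD Dsub by auto
  have lek: "\<And>x. x \<in> set L \<Longrightarrow> x K \<le> e K"
    using A_le_at L above Kn by blast
  obtain x0 where x0: "x0 \<in> set L" "x0 K \<noteq> e K" using KD unfolding D_def by auto
  have "x0 K < e K" using lek[OF x0(1)] x0(2) by simp
  hence "(\<Sum>x\<leftarrow>L. x K) < (\<Sum>x\<leftarrow>L. e K)"
    using sum_list_strict_mono[of L "\<lambda>x. x K" "\<lambda>x. e K" x0] lek x0(1) by blast
  hence "length L * b K < length L * e K" using sumL sum_list_const_fun by metis
  hence bK: "b K < e K" by simp
  have "\<And>j. j > K \<Longrightarrow> b j = e j"
  proof -
    fix j assume "j > K"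
    have "(\<Sum>x\<leftarrow>L. x j) = (\<Sum>x\<leftarrow>L. e j)"
      by (rule arg_cong[where f=sum_list], rule map_cong) (use above \<open>j > K\<close> in auto)
    hence "length L * b j = length L * e j" using sumL sum_list_const_fun by metis
    moreover have "length L > 0" using x0 by auto
    ultimately show "b j = e j" by simp
  qed
  then show ?thesis unfolding nl_def using bK by blast
qed

lemma S_all_eq:
  assumes "L \<noteq> []" and "\<forall>x\<in>set L. x = e" and sumL: "\<forall>j. (\<Sum>x\<leftarrow>L. x j) = length L * b j"
  shows "b = e"
proof
  fix j
  have "(\<Sum>x\<leftarrow>L. x j) = (\<Sum>x\<leftarrow>L. e j)"
    by (rule arg_cong[where f=sum_list], rule map_cong) (use assms in auto)
  hence "length L * b j = length L * e j" using sumL sum_list_const_fun by metis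
  then show "b j = e j" using assms(1) by simp
qed

lemma S_le:
  assumes "Sset n e b" and esupp: "\<forall>j. j \<notin> {1..n} \<longrightarrow> e j = 0"
  shows "b = e \<or> nl b e"
proof -
  obtain L where L0: "L \<noteq> [] \<and> (\<forall>x\<in>set L. Aset n e x) \<and> (\<forall>j. (\<Sum>x\<leftarrow>L. x j) = length L * b j)"
    using assms(1) unfolding Sset_def by (rule exE)
  have L: "L \<noteq> []" "\<forall>x\<in>set L. Aset n e x" "\<forall>j. (\<Sum>x\<leftarrow>L. x j) = length L * b j"
    using L0 by auto
  show ?thesis
  proof (cases "\<exists>x\<in>set L. x \<noteq> e")
    case True then show ?thesis using S_nl_aux L esupp by blast
  next
    case False then show ?thesis using S_all_eq L by blast
  qed
qed

lemma sw_apply: "sw i x j = x (if j = i then i+1 else if j = i+1 then i else j)"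
  unfolding sw_def s_def by (auto simp: transpose_def)

lemma sw_sw[simp]: "sw i (sw i x) = x"
  unfolding sw_def s_def by (auto simp: fun_eq_iff)

lemma rk_sw_low:
  assumes "k \<le> i" "i < n"
  shows "rk n (sw i y) k t = rk n y k t"
proof -
  have p: "s i permutes {k..n}" unfolding s_def using assms by (intro permutes_swap_id) auto
  have "rk n y k t = (\<Sum>j\<in>{k..n}. (\<lambda>j. if t \<le> y j then 1 else 0) j)" unfolding rk_def by simp
  also have "\<dots> = (\<Sum>j\<in>{k..n}. ((\<lambda>j. if t \<le> y j then 1 else (0::nat)) \<circ> s i) j)"
    using sum.permute[OF p] by blast
  also have "\<dots> = rk n (sw i y) k t" unfolding rk_def sw_def by simp
  finally show ?thesis by simp
qed

lemma rk_sw_high: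
  assumes "k \<ge> i + 2"
  shows "rk n (sw i y) k t = rk n y k t"
  unfolding rk_def by (rule sum.cong) (use assms in \<open>auto simp: sw_apply\<close>)

lemma rk_sw_mid:
  assumes "1 \<le> i" "i < n"
  shows "rk n (sw i y) (i+1) t = (if t \<le> y i then 1 else 0) + rk n y (i+2) t"
proof -
  have "rk n (sw i y) (i+1) t = (if t \<le> sw i y (i+1) then 1 else 0) + rk n (sw i y) (Suc (i+1)) t"
    using rk_split[of "i+1" n "sw i y"] assms by simp
  also have "rk n (sw i y) (Suc (i+1)) t = rk n y (i+2) t" using rk_sw_high[of i "Suc (i+1)"] by simp
  moreover have "sw i y (i+1) = y i" by (simp add: sw_apply)
  ultimately show ?thesis by simp
qed

lemma A_mono:
  assumes A: "Aset n e x" and i: "1 \<le> i" "i < n" and des: "e (i+1) < e i"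
  shows "Aset n (sw i e) x"
  unfolding Aset_def
proof (intro conjI allI)
  show "\<And>j. j \<notin> {1..n} \<longrightarrow> x j = 0" using A unfolding Aset_def by blast
  fix k t
  have xe: "rk n x k t \<le> rk n e k t" using A unfolding Aset_def by blast
  consider "k \<le> i" | "k = i+1" | "k \<ge> i+2" by linarith
  then show "rk n x k t \<le> rk n (sw i e) k t"
  proof cases
    case 1 then show ?thesis using xe rk_sw_low[OF 1 i(2)] by simp
  next
    case 2
    have "rk n e (i+1) t = (if t \<le> e (i+1) then 1 else 0) + rk n e (i+2) t"
      using rk_split[of "i+1" n e t] i by simp
    also have "\<dots> \<le> (if t \<le> e i then 1 else 0) + rk n e (i+2) t" using des by auto
    also have "\<dots> = rk n (sw i e) (i+1) t" using rk_sw_mid[OF i] by simp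
    finally show ?thesis using xe 2 by simp
  next
    case 3 then show ?thesis using xe rk_sw_high[OF 3] by simp
  qed
qed

lemma A_swap:
  assumes A: "Aset n e x" and i: "1 \<le> i" "i < n" and des: "e (i+1) < e i"
  shows "Aset n (sw i e) (sw i x)"
  unfolding Aset_def
proof (intro conjI allI)
  fix j show "j \<notin> {1..n} \<longrightarrow> sw i x j = 0"
    using A i unfolding Aset_def by (auto simp: sw_apply)
next
  fix k t
  have xe: "\<And>k. rk n x k t \<le> rk n e k t" using A unfolding Aset_def by blast
  consider "k \<le> i" | "k = i+1" | "k \<ge> i+2" by linarith
  then show "rk n (sw i x) k t \<le> rk n (sw i e) k t"
  proof cases
    case 1 then show ?thesis using xe[of k] rk_sw_low[OF 1 i(2)] by simp
  next
    case 2
    have sx: "rk n (sw i x) (i+1) t = (if t \<le> x i then 1 else 0) + rk n x (i+2) t"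
      using rk_sw_mid[OF i] by simp
    have se: "rk n (sw i e) (i+1) t = (if t \<le> e i then 1 else 0) + rk n e (i+2) t"
      using rk_sw_mid[OF i] by simp
    have xi: "rk n x i t = (if t \<le> x i then 1 else 0) + ((if t \<le> x (i+1) then 1 else 0) + rk n x (i+2) t)"
      using rk_split[of i n x t] rk_split[of "i+1" n x t] i by simp
    have ei: "rk n e i t = (if t \<le> e i then 1 else 0) + ((if t \<le> e (i+1) then 1 else 0) + rk n e (i+2) t)"
      using rk_split[of i n e t] rk_split[of "i+1" n e t] i by simp
    show ?thesis
    proof (cases "t \<le> e (i+1)")
      case True
      then show ?thesis using sx se xe[of "i+2"] des 2 by auto
    next
      case False
      then show ?thesis using sx se xi ei xe[of i] 2 by auto
    qed
  next
    case 3 then show ?thesis using xe[of k] rk_sw_high[OF 3] by simp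
  qed
qed

lemma sum_list_concat_replicate:
  "(\<Sum>x\<leftarrow>concat (replicate m L). f x) = m * (\<Sum>x\<leftarrow>L. (f x :: nat))"
  by (induction m) auto

lemma length_concat_replicate: "length (concat (replicate m L)) = m * length L"
  by (induction m) auto

lemma set_concat_replicate: "m > 0 \<Longrightarrow> set (concat (replicate m L)) = set L"
  by (induction m) auto

lemma set_concat_replicate_sub: "set (concat (replicate m L)) \<subseteq> set L"
  by (induction m) auto

lemma step_weights:
  assumes cj: "\<forall>j. j \<noteq> i \<longrightarrow> j \<noteq> i+1 \<longrightarrow> c j = b j"
    and csum: "c i + c (i+1) = b i + b (i+1)"
    and clo: "min (b i) (b (i+1)) < c (i+1)" and chi: "c (i+1) \<le> max (b i) (b (i+1))"
  shows "\<exists>\<alpha> \<beta>. \<alpha> + \<beta> > 0 \<and> (\<forall>j. \<alpha> * b j + \<beta> * sw i b j = (\<alpha>+\<beta>) * c j)"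
proof (cases "b (i+1) < b i")
  case True
  have m1: "min (b i) (b (i+1)) = b (i+1)" "max (b i) (b (i+1)) = b i" using True by auto
  have "b (i+1) \<le> c i" using csum chi m1 by linarith
  then obtain p where p: "c i = b (i+1) + p" using le_iff_add by blast
  have "c i \<le> b i" using csum clo m1 by linarith
  then obtain q where q: "b i = c i + q" using le_iff_add by blast
  have ci1: "c (i+1) = b (i+1) + q" using csum p q by simp
  have q0: "q > 0" using clo m1 ci1 by simp
  show ?thesis
  proof (intro exI conjI allI)
    show "p + q > 0" using q0 by simp
    fix j
    show "p * b j + q * sw i b j = (p+q) * c j"
    proof (cases "j = i \<or> j = i+1")
      case True
      then show ?thesis using p q ci1 by (auto simp: sw_apply algebra_simps)
    next
      case False
      then show ?thesis using cj by (auto simp: sw_apply algebra_simps)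
    qed
  qed
next
  case False
  hence lt: "b i < b (i+1)" using clo chi by auto
  have m1: "min (b i) (b (i+1)) = b i" "max (b i) (b (i+1)) = b (i+1)" using lt by auto
  have "b i \<le> c i" using csum chi m1 by linarith
  then obtain p where p: "c i = b i + p" using le_iff_add by blast
  have "c i \<le> b (i+1)" using csum clo m1 by linarith
  then obtain q where q: "b (i+1) = c i + q" using le_iff_add by blast
  have ci1: "c (i+1) = b i + q" using csum p q by simp
  have q0: "q > 0" using clo m1 ci1 by simp
  show ?thesis
  proof (intro exI conjI allI)
    show "q + p > 0" using q0 by simp
    fix j
    show "q * b j + p * sw i b j = (q+p) * c j"
    proof (cases "j = i \<or> j = i+1")
      case True
      then show ?thesis using p q ci1 by (auto simp: sw_apply algebra_simps)
    next
      case False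
      then show ?thesis using cj by (auto simp: sw_apply algebra_simps)
    qed
  qed
qed

lemma nl_sw: "e (i+1) < e i \<Longrightarrow> nl e (sw i e)"
  unfolding nl_def by (rule exI[of _ "i+1"]) (auto simp: sw_apply)

lemma S_step:
  assumes S: "Sset n e b" and i: "1 \<le> i" "i < n" and des: "e (i+1) < e i"
    and esupp: "\<forall>j. j \<notin> {1..n} \<longrightarrow> e j = 0"
    and cj: "\<forall>j. j \<noteq> i \<longrightarrow> j \<noteq> i+1 \<longrightarrow> c j = b j"
    and csum: "c i + c (i+1) = b i + b (i+1)"
    and clo: "min (b i) (b (i+1)) < c (i+1)" and chi: "c (i+1) \<le> max (b i) (b (i+1))"
  shows "Sset n (sw i e) c \<and> (b \<noteq> e \<longrightarrow> c \<noteq> sw i e)"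
proof -
  obtain L where L0: "L \<noteq> [] \<and> (\<forall>x\<in>set L. Aset n e x) \<and> (\<forall>j. (\<Sum>x\<leftarrow>L. x j) = length L * b j)"
    using S unfolding Sset_def by (rule exE)
  have L: "L \<noteq> []" "\<forall>x\<in>set L. Aset n e x" "\<forall>j. (\<Sum>x\<leftarrow>L. x j) = length L * b j"
    using L0 by auto
  obtain \<alpha> \<beta> where ab: "\<alpha> + \<beta> > 0" "\<forall>j. \<alpha> * b j + \<beta> * sw i b j = (\<alpha>+\<beta>) * c j"
    using step_weights[OF cj csum clo chi] by (elim exE conjE) (rule that)
  define L' where "L' = concat (replicate \<alpha> L) @ concat (replicate \<beta> (map (sw i) L))"
  have lenL': "length L' = (\<alpha> + \<beta>) * length L"
    unfolding L'_def by (simp add: length_concat_replicate algebra_simps)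
  have L'ne: "L' \<noteq> []" using lenL' L(1) ab(1) by auto
  have memL': "\<forall>x\<in>set L'. Aset n (sw i e) x"
  proof
    fix x assume "x \<in> set L'"
    hence "x \<in> set (concat (replicate \<alpha> L)) \<or> x \<in> set (concat (replicate \<beta> (map (sw i) L)))"
      unfolding L'_def by simp
    then consider "x \<in> set L" | "x \<in> set (map (sw i) L)"
      using set_concat_replicate_sub[of \<alpha> L] set_concat_replicate_sub[of \<beta> "map (sw i) L"] by blast
    then show "Aset n (sw i e) x"
    proof cases
      case 1 then show ?thesis using A_mono L(2) i des by blast
    next
      case 2
      then obtain y where y: "y \<in> set L" "x = sw i y" by auto
      show ?thesis unfolding y(2) by (rule A_swap) (use L(2) y(1) i des in auto)
    qed
  qed
  have sumL': "\<forall>j. (\<Sum>x\<leftarrow>L'. x j) = length L' * c j"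
  proof
    fix j
    have "(\<Sum>x\<leftarrow>map (sw i) L. x j) = (\<Sum>x\<leftarrow>L. x (s i j))"
      by (simp add: sw_def o_def)
    also have "\<dots> = length L * b (s i j)" using L(3) by simp
    finally have sw: "(\<Sum>x\<leftarrow>map (sw i) L. x j) = length L * sw i b j" by (simp add: sw_def)
    have "(\<Sum>x\<leftarrow>L'. x j) = \<alpha> * (\<Sum>x\<leftarrow>L. x j) + \<beta> * (\<Sum>x\<leftarrow>map (sw i) L. x j)"
      unfolding L'_def by (simp only: map_append sum_list_append sum_list_concat_replicate)
    also have "\<dots> = \<alpha> * (length L * b j) + \<beta> * (length L * sw i b j)" using L(3) sw by simp
    also have "\<dots> = length L * (\<alpha> * b j + \<beta> * sw i b j)" by (simp add: algebra_simps)
    also have "\<dots> = length L' * c j" using ab(2) lenL' by simp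
    finally show "(\<Sum>x\<leftarrow>L'. x j) = length L' * c j" .
  qed
  have S': "Sset n (sw i e) c" unfolding Sset_def using L'ne memL' sumL' by (intro exI[of _ L']) simp
  have swsupp: "\<forall>j. j \<notin> {1..n} \<longrightarrow> sw i e j = 0" using esupp i by (auto simp: sw_apply)
  have strict: "c \<noteq> sw i e" if bne: "b \<noteq> e"
  proof
    assume ceq: "c = sw i e"
    have all: "\<forall>x\<in>set L'. x = sw i e"
    proof (rule ccontr)
      assume "\<not> (\<forall>x\<in>set L'. x = sw i e)"
      hence "nl c (sw i e)" using S_nl_aux[OF memL' sumL' swsupp] by blast
      then show False using ceq nl_irrefl by simp
    qed
    show False
    proof (cases "\<alpha> > 0")
      case True
      hence "set (concat (replicate \<alpha> L)) = set L" by (rule set_concat_replicate)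
      hence "\<forall>x\<in>set L. x = sw i e" using all unfolding L'_def by simp
      hence beq: "b = sw i e" using S_all_eq L(1,3) by blast
      have "b = e \<or> nl b e" using S_le[OF S esupp] .
      then show False using bne beq nl_sw[OF des] nl_asym by blast
    next
      case False
      hence "\<beta> > 0" using ab(1) by simp
      hence "set (concat (replicate \<beta> (map (sw i) L))) = set (map (sw i) L)" by (rule set_concat_replicate)
      hence "\<forall>x\<in>set (map (sw i) L). x = sw i e" using all unfolding L'_def by simp
      hence "\<forall>x\<in>set L. x = e"
      proof (intro ballI)
        fix x assume xs: "\<forall>x\<in>set (map (sw i) L). x = sw i e" and "x \<in> set L"
        hence "sw i x = sw i e" by simp
        hence "sw i (sw i x) = sw i (sw i e)" by simp
        thus "x = e" by simp
      qed
      hence "b = e" using S_all_eq L(1,3) by blast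
      then show False using bne by simp
    qed
  qed
  show ?thesis using S' strict by blast
qed



definition invs :: "nat \<Rightarrow> (nat \<Rightarrow> nat) \<Rightarrow> (nat \<times> nat) set" where
  "invs n x = {(i, j). 1 \<le> i \<and> i < j \<and> j \<le> n \<and> x i > x j}"

lemma inv_count_invs: "inv_count n x = card (invs n x)"
  unfolding inv_count_def invs_def by simp

lemma finite_invs: "finite (invs n x)"
  by (rule finite_subset[of _ "{1..n} \<times> {1..n}"]) (auto simp: invs_def)

lemma word_perm_Nil[simp]: "word_perm [] = id"
  unfolding word_perm_def by simp

lemma word_perm_Cons[simp]: "word_perm (i # ws) = s i \<circ> word_perm ws"
  unfolding word_perm_def by simp

lemma word_perm_append: "word_perm (xs @ ys) = word_perm xs \<circ> word_perm ys"
  by (induction xs) (auto simp: o_assoc)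

lemma s_permutes: "1 \<le> i \<Longrightarrow> i < n \<Longrightarrow> s i permutes {1..n}"
  unfolding s_def by (rule permutes_swap_id) auto

lemma s_gt_iff:
  assumes "y \<noteq> z"
  shows "s i y > s i z \<longleftrightarrow> ((y > z) \<noteq> ({y, z} = {i, i+1}))"
  using assms unfolding s_def transpose_def by auto

lemma inv_step:
  assumes x: "x permutes {1..n}" and i: "1 \<le> i" "i < n"
  defines "p \<equiv> inv x i" and "q \<equiv> inv x (i+1)"
  shows "(p < q \<and> invs n (s i \<circ> x) = insert (p, q) (invs n x) \<and> (p, q) \<notin> invs n x) \<or>
         (q < p \<and> invs n (s i \<circ> x) = invs n x - {(q, p)} \<and> (q, p) \<in> invs n x)"
proof -
  have xp: "x p = i" and xq: "x q = i+1" unfolding p_def q_def using permutes_inverses[OF x] by auto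
  have pin: "p \<in> {1..n}" unfolding p_def using permutes_in_image[OF permutes_inv[OF x], of i] i by auto
  have qin: "q \<in> {1..n}" unfolding q_def using permutes_in_image[OF permutes_inv[OF x], of "i+1"] i by auto
  have inj: "inj x" using permutes_inj[OF x] .
  have pq: "p \<noteq> q" using xp xq by auto
  have key: "\<And>a b. a \<noteq> b \<Longrightarrow> ({x a, x b} = {i, i+1}) \<longleftrightarrow> ({a, b} = {p, q})"
  proof -
    fix a b :: nat assume "a \<noteq> b"
    have "{x a, x b} = {i, i+1} \<longleftrightarrow> (x a = i \<and> x b = i+1) \<or> (x a = i+1 \<and> x b = i)"
      by (auto simp: doubleton_eq_iff)
    also have "\<dots> \<longleftrightarrow> (a = p \<and> b = q) \<or> (a = q \<and> b = p)"
      using xp xq inj by (metis injD)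
    also have "\<dots> \<longleftrightarrow> {a, b} = {p, q}" by (auto simp: doubleton_eq_iff)
    finally show "({x a, x b} = {i, i+1}) \<longleftrightarrow> ({a, b} = {p, q})" .
  qed
  have mem: "\<And>a b. (a, b) \<in> invs n (s i \<circ> x) \<longleftrightarrow>
      (1 \<le> a \<and> a < b \<and> b \<le> n \<and> ((x a > x b) \<noteq> ({a, b} = {p, q})))"
  proof -
    fix a b
    show "(a, b) \<in> invs n (s i \<circ> x) \<longleftrightarrow>
      (1 \<le> a \<and> a < b \<and> b \<le> n \<and> ((x a > x b) \<noteq> ({a, b} = {p, q})))"
    proof (cases "a < b")
      case True
      hence "x a \<noteq> x b" using inj by (metis injD less_irrefl)
      then show ?thesis unfolding invs_def using s_gt_iff[of "x a" "x b" i] key[of a b] True by auto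
    next
      case False then show ?thesis unfolding invs_def by auto
    qed
  qed
  show ?thesis
  proof (cases "p < q")
    case True
    have "(p, q) \<notin> invs n x" unfolding invs_def using xp xq by auto
    moreover have "invs n (s i \<circ> x) = insert (p, q) (invs n x)"
    proof (rule set_eqI)
      fix ab :: "nat \<times> nat"
      obtain a b where ab: "ab = (a, b)" by (cases ab)
      show "ab \<in> invs n (s i \<circ> x) \<longleftrightarrow> ab \<in> insert (p, q) (invs n x)"
        unfolding ab mem using True pin qin xp xq
        by (auto simp: invs_def doubleton_eq_iff)
    qed
    ultimately show ?thesis using True by blast
  next
    case False
    hence qp: "q < p" using pq by simp
    have "(q, p) \<in> invs n x" unfolding invs_def using xp xq qp pin qin by auto
    moreover have "invs n (s i \<circ> x) = invs n x - {(q, p)}"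
    proof (rule set_eqI)
      fix ab :: "nat \<times> nat"
      obtain a b where ab: "ab = (a, b)" by (cases ab)
      show "ab \<in> invs n (s i \<circ> x) \<longleftrightarrow> ab \<in> invs n x - {(q, p)}"
        unfolding ab mem using qp pin qin xp xq
        by (auto simp: invs_def doubleton_eq_iff)
    qed
    ultimately show ?thesis using qp by blast
  qed
qed

lemma card_inv_step0:
  assumes x: "x permutes {1..n}" and i: "1 \<le> i" "i < n"
  shows "card (invs n (s i \<circ> x)) \<le> card (invs n x) + 1 \<and>
    (card (invs n (s i \<circ> x)) = card (invs n x) + 1 \<longrightarrow>
           inv x i < inv x (i+1) \<and> invs n x \<subseteq> invs n (s i \<circ> x))"
proof -
  let ?I = "invs n x" let ?J = "invs n (s i \<circ> x)"
  have fin: "finite ?I" by (rule finite_invs)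
  from inv_step[OF x i] consider
      (a) "inv x i < inv x (i+1)" "?J = insert (inv x i, inv x (i+1)) ?I" "(inv x i, inv x (i+1)) \<notin> ?I"
    | (b) "inv x (i+1) < inv x i" "?J = ?I - {(inv x (i+1), inv x i)}" "(inv x (i+1), inv x i) \<in> ?I"
    by blast
  then show ?thesis
  proof cases
    case a
    have "card ?J = card ?I + 1" unfolding a(2) using card_insert_disjoint[OF fin a(3)] by simp
    moreover have "?I \<subseteq> ?J" unfolding a(2) by blast
    ultimately show ?thesis using a(1) by simp
  next
    case b
    have "card ?J = card ?I - 1" unfolding b(2) using card_Diff_singleton[OF b(3)] by simp
    then show ?thesis by (intro conjI impI) linarith+
  qed
qed

lemma card_inv_step:
  assumes x: "x permutes {1..n}" and i: "1 \<le> i" "i < n"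
  shows "card (invs n (s i \<circ> x)) \<le> card (invs n x) + 1"
    and "card (invs n (s i \<circ> x)) = card (invs n x) + 1 \<Longrightarrow>
           inv x i < inv x (i+1) \<and> invs n x \<subseteq> invs n (s i \<circ> x)"
  using card_inv_step0[OF x i] by blast+

lemma word_perm_bound:
  assumes ws: "\<forall>i\<in>set ws. 1 \<le> i \<and> i < n" and y: "y permutes {1..n}"
  shows "word_perm ws \<circ> y permutes {1..n} \<and>
         card (invs n (word_perm ws \<circ> y)) \<le> length ws + card (invs n y) \<and>
         (card (invs n (word_perm ws \<circ> y)) = length ws + card (invs n y) \<longrightarrow>
            invs n y \<subseteq> invs n (word_perm ws \<circ> y))"
  using ws
proof (induction ws)
  case Nil then show ?case using y by simp
next
  case (Cons i ws)
  let ?z = "word_perm ws \<circ> y"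
  have ws': "\<forall>i\<in>set ws. 1 \<le> i \<and> i < n" using Cons.prems by simp
  note IH0 = Cons.IH[OF ws']
  have IH: "?z permutes {1..n}" "card (invs n ?z) \<le> length ws + card (invs n y)"
    "card (invs n ?z) = length ws + card (invs n y) \<longrightarrow> invs n y \<subseteq> invs n ?z"
    using IH0 by (blast, blast, blast)
  have i: "1 \<le> i" "i < n" using Cons.prems by auto
  have eq: "word_perm (i # ws) \<circ> y = s i \<circ> ?z" by (simp add: o_assoc)
  have perm: "s i \<circ> ?z permutes {1..n}" using permutes_compose[OF IH(1) s_permutes[OF i]] .
  have c1: "card (invs n (s i \<circ> ?z)) \<le> card (invs n ?z) + 1" using card_inv_step(1)[OF IH(1) i] .
  show ?case
  proof (intro conjI impI)
    show "word_perm (i # ws) \<circ> y permutes {1..n}" using perm eq by simp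
    show "card (invs n (word_perm (i # ws) \<circ> y)) \<le> length (i # ws) + card (invs n y)"
      using c1 IH(2) eq by simp
    assume h: "card (invs n (word_perm (i # ws) \<circ> y)) = length (i # ws) + card (invs n y)"
    hence e1: "card (invs n (s i \<circ> ?z)) = card (invs n ?z) + 1" and e2: "card (invs n ?z) = length ws + card (invs n y)"
      using c1 IH(2) eq by auto
    have "invs n ?z \<subseteq> invs n (s i \<circ> ?z)" using card_inv_step(2)[OF IH(1) i e1] by blast
    moreover have "invs n y \<subseteq> invs n ?z" using IH(3) e2 by blast
    ultimately show "invs n y \<subseteq> invs n (word_perm (i # ws) \<circ> y)" using eq by auto
  qed
qed

lemma reduced_split:
  assumes red: "reduced_word n w is" and split: "is = pre @ i # suf"
  defines "v \<equiv> word_perm suf"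
  shows "v permutes {1..n} \<and> 1 \<le> i \<and> i < n \<and> inv v i < inv v (i+1) \<and> invs n (s i \<circ> v) \<subseteq> invs n w"
proof -
  have letters: "\<forall>j\<in>set is. 1 \<le> j \<and> j < n" and wdef: "word_perm is = w"
    and len: "length is = card (invs n w)"
    using red unfolding reduced_word_def inv_count_invs by auto
  have i: "1 \<le> i" "i < n" using letters split by auto
  have idp: "(id :: nat \<Rightarrow> nat) permutes {1..n}" by (rule permutes_id)
  have "invs n id = {}" unfolding invs_def by auto
  hence inv_id: "card (invs n id) = 0" by simp
  have vb: "v permutes {1..n}" "card (invs n v) \<le> length suf"
    using word_perm_bound[of suf n id] letters split idp inv_id unfolding v_def by auto
  have c1: "card (invs n (s i \<circ> v)) \<le> card (invs n v) + 1" using card_inv_step(1)[OF vb(1) i] .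
  have sv: "s i \<circ> v permutes {1..n}" using permutes_compose[OF vb(1) s_permutes[OF i]] .
  have w: "w = word_perm pre \<circ> (s i \<circ> v)"
    using wdef split unfolding v_def by (simp add: word_perm_append)
  have wb: "card (invs n (word_perm pre \<circ> (s i \<circ> v))) \<le> length pre + card (invs n (s i \<circ> v)) \<and>
     (card (invs n (word_perm pre \<circ> (s i \<circ> v))) = length pre + card (invs n (s i \<circ> v)) \<longrightarrow>
       invs n (s i \<circ> v) \<subseteq> invs n (word_perm pre \<circ> (s i \<circ> v)))"
    using word_perm_bound[OF _ sv, of pre] letters split by auto
  have lenis: "length is = length pre + length suf + 1" using split by simp
  have wb1: "card (invs n w) \<le> length pre + card (invs n (s i \<circ> v))" using wb w by simp
  have e1: "card (invs n (s i \<circ> v)) = card (invs n v) + 1"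
    using wb1 c1 vb(2) len lenis by linarith
  have e2: "card (invs n w) = length pre + card (invs n (s i \<circ> v))"
    using wb1 c1 vb(2) len lenis by linarith
  show ?thesis using card_inv_step(2)[OF vb(1) i e1] wb e2 w vb(1) i by auto
qed

lemma mono_chain:
  assumes "\<And>j. p \<le> j \<Longrightarrow> j < q \<Longrightarrow> (w::nat\<Rightarrow>nat) j \<le> w (j+1)" and "p \<le> q"
  shows "w p \<le> w q"
  using assms
proof (induction q)
  case 0 then show ?case by simp
next
  case (Suc q)
  show ?case
  proof (cases "p = Suc q")
    case True then show ?thesis by simp
  next
    case False
    hence "p \<le> q" using Suc.prems by simp
    hence "w p \<le> w q" using Suc by simp
    also have "w q \<le> w (Suc q)" using Suc.prems(1)[of q] \<open>p \<le> q\<close> by simp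
    finally show ?thesis .
  qed
qed

lemma good_split:
  assumes dec: "\<And>i j. 1 \<le> i \<Longrightarrow> i \<le> j \<Longrightarrow> j \<le> n \<Longrightarrow> d j \<le> d i"
    and des: "Des_perm n w \<subseteq> Des_seq n d"
    and red: "reduced_word n w is" and split: "is = pre @ i # suf"
  defines "v \<equiv> word_perm suf"
  shows "v permutes {1..n} \<and> 1 \<le> i \<and> i < n \<and> d (inv v (i+1)) < d (inv v i)"
proof -
  have R: "v permutes {1..n}" "1 \<le> i" "i < n" "inv v i < inv v (i+1)" "invs n (s i \<circ> v) \<subseteq> invs n w"
    using reduced_split[OF red split] unfolding v_def by auto
  define p where "p = inv v i"
  define q where "q = inv v (i+1)"
  have pin: "p \<in> {1..n}" unfolding p_def using permutes_in_image[OF permutes_inv[OF R(1)], of i] R by auto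
  have qin: "q \<in> {1..n}" unfolding q_def using permutes_in_image[OF permutes_inv[OF R(1)], of "i+1"] R by auto
  have pq: "p < q" using R(4) unfolding p_def q_def .
  have vp: "v p = i" and vq: "v q = i+1" unfolding p_def q_def using permutes_inverses[OF R(1)] by auto
  have "d q \<le> d p" using dec[of p q] pin qin pq by auto
  moreover have "d q \<noteq> d p"
  proof
    assume eq: "d q = d p"
    have "(p, q) \<in> invs n (s i \<circ> v)" unfolding invs_def using pin qin pq vp vq
      by (auto simp: s_def)
    hence "(p, q) \<in> invs n w" using R(5) by blast
    hence wpq: "w p > w q" unfolding invs_def by auto
    have "\<exists>j. p \<le> j \<and> j < q \<and> w (j+1) < w j"
    proof (rule ccontr)
      assume "\<not> ?thesis"
      hence "\<And>j. p \<le> j \<Longrightarrow> j < q \<Longrightarrow> w j \<le> w (j+1)" by (meson not_le)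
      hence "w p \<le> w q" using mono_chain[of p q w] pq by simp
      with wpq show False by simp
    qed
    then obtain j where j: "p \<le> j" "j < q" "w (j+1) < w j" by blast
    have "j \<in> Des_perm n w" unfolding Des_perm_def using j pin qin by auto
    hence "j \<in> Des_seq n d" using des by blast
    hence dj: "d (j+1) < d j" unfolding Des_seq_def by auto
    have "d j \<le> d p" using dec[of p j] j pin qin by auto
    moreover have "d q \<le> d (j+1)" using dec[of "j+1" q] j pin qin by auto
    ultimately show False using dj eq by simp
  qed
  ultimately show ?thesis using R unfolding p_def q_def by simp
qed



lemma lookup_smult:
  "Poly_Mapping.lookup (Poly_Mapping.single 0 c * p) x = c * Poly_Mapping.lookup p x"
  for p :: "'a::field mpoly"
  by (simp add: mult_map_scale_conv_mult[symmetric] Poly_Mapping.map.rep_eq when_def)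

lemma keys_smult: "Poly_Mapping.keys (Poly_Mapping.single 0 c * p) \<subseteq> Poly_Mapping.keys p"
  for p :: "'a::field mpoly"
  by (auto simp: in_keys_iff lookup_smult)

lemma single_as_smult: "Poly_Mapping.single m c = Poly_Mapping.single 0 c * Poly_Mapping.single m (1::'a::field)"
  for m :: "nat \<Rightarrow>\<^sub>0 nat"
  by (simp add: mult_single)

lemma poly_expand:
  fixes f :: "'a::field mpoly"
  shows "f = (\<Sum>m\<in>Poly_Mapping.keys f. Poly_Mapping.single m (Poly_Mapping.lookup f m))"
proof (rule poly_mapping_eqI)
  fix x
  have "Poly_Mapping.lookup (\<Sum>m\<in>Poly_Mapping.keys f. Poly_Mapping.single m (Poly_Mapping.lookup f m)) x
     = (\<Sum>m\<in>Poly_Mapping.keys f. (if m = x then Poly_Mapping.lookup f m else 0))"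
    by (simp add: lookup_sum lookup_single when_def)
  also have "\<dots> = Poly_Mapping.lookup f x"
    by (simp add: in_keys_iff)
  finally show "Poly_Mapping.lookup f x = Poly_Mapping.lookup (\<Sum>m\<in>Poly_Mapping.keys f. Poly_Mapping.single m (Poly_Mapping.lookup f m)) x" by simp
qed

lemma var_mult:
  "var i * Poly_Mapping.single m c = Poly_Mapping.single (Poly_Mapping.single i 1 + m) (c::'a::field)"
  unfolding var_def by (simp add: mult_single)

lemma var_pow: "(var i :: 'a::field mpoly) ^ k = Poly_Mapping.single (Poly_Mapping.single i k) 1"
proof (induction k)
  case 0 then show ?case by simp
next
  case (Suc k)
  have "(var i :: 'a mpoly) ^ Suc k = var i * Poly_Mapping.single (Poly_Mapping.single i k) 1"
    using Suc by simp
  also have "\<dots> = Poly_Mapping.single (Poly_Mapping.single i 1 + Poly_Mapping.single i k) 1"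
    by (simp add: var_mult)
  also have "Poly_Mapping.single i 1 + Poly_Mapping.single i k = Poly_Mapping.single i (Suc k)"
    by (simp add: single_add[symmetric])
  finally show ?case .
qed

lemma prod_singles:
  "finite I \<Longrightarrow> (\<Prod>i\<in>I. Poly_Mapping.single (g i) (1::'a::field)) = Poly_Mapping.single (\<Sum>i\<in>I. g i) 1"
  for g :: "nat \<Rightarrow> nat \<Rightarrow>\<^sub>0 nat"
  by (induction I rule: finite_induct) (auto simp: mult_single)

definition dm :: "nat \<Rightarrow> (nat \<Rightarrow> nat) \<Rightarrow> (nat \<Rightarrow>\<^sub>0 nat)" where
  "dm n d = (\<Sum>i\<in>{1..n}. Poly_Mapping.single i (d i))"

lemma lookup_dm: "Poly_Mapping.lookup (dm n d) j = (if j \<in> {1..n} then d j else 0)"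
  unfolding dm_def by (simp add: lookup_sum lookup_single when_def)

lemma xpow_single: "(xpow n d :: 'a::field mpoly) = Poly_Mapping.single (dm n d) 1"
  unfolding xpow_def dm_def by (simp add: var_pow prod_singles)

lemma lookup_perm_mono:
  assumes "bij w"
  shows "Poly_Mapping.lookup (perm_mono w m) x = Poly_Mapping.lookup m (inv w x)"
proof -
  have eq: "\<And>j. (w j = x) \<longleftrightarrow> (j = inv w x)"
    using assms by (metis bij_inv_eq_iff)
  have "Poly_Mapping.lookup (perm_mono w m) x =
      (\<Sum>j\<in>Poly_Mapping.keys m. (if j = inv w x then Poly_Mapping.lookup m j else 0))"
    unfolding perm_mono_def by (simp add: lookup_sum lookup_single when_def eq)
  also have "\<dots> = Poly_Mapping.lookup m (inv w x)" by (simp add: in_keys_iff)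
  finally show ?thesis .
qed

lemma perm_poly_single:
  "perm_poly w (Poly_Mapping.single m c) = Poly_Mapping.single (perm_mono w m) (c::'a::field)"
  unfolding perm_poly_def by (cases "c = 0") auto

lemma perm_poly_expand:
  "perm_poly w f = (\<Sum>m\<in>Poly_Mapping.keys f. Poly_Mapping.single 0 (Poly_Mapping.lookup f m) * Poly_Mapping.single (perm_mono w m) (1::'a::field))"
  unfolding perm_poly_def by (simp add: mult_single)

definition upd :: "nat \<Rightarrow> (nat \<Rightarrow>\<^sub>0 nat) \<Rightarrow> nat \<Rightarrow> nat \<Rightarrow> (nat \<Rightarrow>\<^sub>0 nat)" where
  "upd i m \<alpha> \<beta> = Poly_Mapping.update i \<alpha> (Poly_Mapping.update (i+1) \<beta> m)"

lemma lookup_upd: "Poly_Mapping.lookup (upd i m \<alpha> \<beta>) j =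
   (if j = i then \<alpha> else if j = i+1 then \<beta> else Poly_Mapping.lookup m j)"
  unfolding upd_def by (simp add: lookup_update)

lemma upd_add_i: "Poly_Mapping.single i 1 + upd i m \<alpha> \<beta> = upd i m (Suc \<alpha>) \<beta>"
  by (rule poly_mapping_eqI) (simp add: lookup_add lookup_upd lookup_single when_def)

lemma upd_add_i1: "Poly_Mapping.single (i+1) 1 + upd i m \<alpha> \<beta> = upd i m \<alpha> (Suc \<beta>)"
  by (rule poly_mapping_eqI) (simp add: lookup_add lookup_upd lookup_single when_def)

lemma upd_add_i1': "Poly_Mapping.single (Suc i) (Suc 0) + upd i m \<alpha> \<beta> = upd i m \<alpha> (Suc \<beta>)"
  using upd_add_i1[of i m \<alpha> \<beta>] by simp

lemma upd_add_i': "Poly_Mapping.single i (Suc 0) + upd i m \<alpha> \<beta> = upd i m (Suc \<alpha>) \<beta>"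
  using upd_add_i[of i m \<alpha> \<beta>] by simp

lemma upd_self: "upd i m (Poly_Mapping.lookup m i) (Poly_Mapping.lookup m (i+1)) = m"
  by (rule poly_mapping_eqI) (simp add: lookup_upd)

lemma bij_s: "bij (s i)" unfolding s_def by simp

lemma inv_s: "inv (s i) = s i" unfolding s_def by simp

lemma perm_mono_s: "perm_mono (s i) m = upd i m (Poly_Mapping.lookup m (i+1)) (Poly_Mapping.lookup m i)"
proof (rule poly_mapping_eqI)
  fix k
  have "Poly_Mapping.lookup (perm_mono (s i) m) k = Poly_Mapping.lookup m (s i k)"
    using lookup_perm_mono[OF bij_s, of i m k] inv_s by simp
  then show "Poly_Mapping.lookup (perm_mono (s i) m) k = Poly_Mapping.lookup (upd i m (Poly_Mapping.lookup m (i+1)) (Poly_Mapping.lookup m i)) k"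
    by (simp add: lookup_upd s_def transpose_def)
qed

definition Dm :: "nat \<Rightarrow> (nat \<Rightarrow>\<^sub>0 nat) \<Rightarrow> 'a::field mpoly" where
  "Dm i m = (let a = Poly_Mapping.lookup m i; b = Poly_Mapping.lookup m (i+1) in
     if b < a then (\<Sum>k<a-b. Poly_Mapping.single (upd i m (a-1-k) (b+1+k)) 1)
     else - (\<Sum>k<b-a. Poly_Mapping.single (upd i m (b-1-k) (a+1+k)) 1))"

lemma Dm_identity:
  "(var i - var (i+1)) * (Dm i m :: 'a::field mpoly) =
     var (i+1) * (Poly_Mapping.single m 1 - Poly_Mapping.single (perm_mono (s i) m) 1)"
proof -
  define a where "a = Poly_Mapping.lookup m i"
  define b where "b = Poly_Mapping.lookup m (i+1)"
  have sw: "perm_mono (s i) m = upd i m b a" unfolding a_def b_def by (rule perm_mono_s)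
  have mm: "m = upd i m a b" unfolding a_def b_def by (rule upd_self[symmetric])
  have r1: "var (i+1) * Poly_Mapping.single m (1::'a) = Poly_Mapping.single (upd i m a (Suc b)) 1"
    by (subst mm) (simp add: var_mult upd_add_i1 upd_add_i1')
  have r2: "var (i+1) * Poly_Mapping.single (perm_mono (s i) m) (1::'a) = Poly_Mapping.single (upd i m b (Suc a)) 1"
    unfolding sw by (simp add: var_mult upd_add_i1 upd_add_i1')
  consider "b < a" | "a < b" | "a = b" by linarith
  then show ?thesis
  proof cases
    case 1
    define F where "F k = (Poly_Mapping.single (upd i m (a-k) (b+1+k)) 1 :: 'a mpoly)" for k
    have D: "Dm i m = (\<Sum>k<a-b. Poly_Mapping.single (upd i m (a-1-k) (b+1+k)) (1::'a))"
      unfolding Dm_def a_def[symmetric] b_def[symmetric] Let_def using 1 by simp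
    have trm: "(var i - var (i+1)) * Poly_Mapping.single (upd i m (a-1-k) (b+1+k)) (1::'a) = F k - F (Suc k)"
      if "k < a - b" for k
    proof -
      have "Suc (a-1-k) = a - k" using that by simp
      then show ?thesis unfolding F_def
        by (simp add: algebra_simps var_mult upd_add_i upd_add_i1 upd_add_i' upd_add_i1')
    qed
    have "(var i - var (i+1)) * Dm i m = (\<Sum>k<a-b. (F k - F (Suc k)))"
      unfolding D sum_distrib_left using trm by (intro sum.cong) auto
    also have "\<dots> = F 0 - F (a - b)" by (rule sum_lessThan_telescope')
    also have "F 0 = Poly_Mapping.single (upd i m a (Suc b)) 1" unfolding F_def by simp
    also have "F (a - b) = Poly_Mapping.single (upd i m b (Suc a)) 1" unfolding F_def using 1
      by (simp add: Suc_diff_le)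
    finally show ?thesis using r1 r2 by (simp add: right_diff_distrib)
  next
    case 2
    define G where "G k = (Poly_Mapping.single (upd i m (b-k) (a+1+k)) 1 :: 'a mpoly)" for k
    have D: "Dm i m = - (\<Sum>k<b-a. Poly_Mapping.single (upd i m (b-1-k) (a+1+k)) (1::'a))"
      unfolding Dm_def a_def[symmetric] b_def[symmetric] Let_def using 2 by simp
    have trm: "(var i - var (i+1)) * Poly_Mapping.single (upd i m (b-1-k) (a+1+k)) (1::'a) = G k - G (Suc k)"
      if "k < b - a" for k
    proof -
      have "Suc (b-1-k) = b - k" using that by simp
      then show ?thesis unfolding G_def
        by (simp add: algebra_simps var_mult upd_add_i upd_add_i1 upd_add_i' upd_add_i1')
    qed
    have "(var i - var (i+1)) * Dm i m = - (\<Sum>k<b-a. (G k - G (Suc k)))"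
      unfolding D mult_minus_right sum_distrib_left using trm by (intro arg_cong[where f=uminus] sum.cong) auto
    also have "(\<Sum>k<b-a. (G k - G (Suc k))) = G 0 - G (b - a)" by (rule sum_lessThan_telescope')
    also have "G 0 = Poly_Mapping.single (upd i m b (Suc a)) 1" unfolding G_def by simp
    also have "G (b - a) = Poly_Mapping.single (upd i m a (Suc b)) 1" unfolding G_def using 2
      by (simp add: Suc_diff_le)
    finally show ?thesis using r1 r2 by (simp add: right_diff_distrib)
  next
    case 3
    have D: "Dm i m = (0 :: 'a mpoly)"
      unfolding Dm_def a_def[symmetric] b_def[symmetric] Let_def using 3 by simp
    have "perm_mono (s i) m = m" using sw mm 3 by simp
    then show ?thesis using D by simp
  qed
qed

definition Dp :: "nat \<Rightarrow> 'a::field mpoly \<Rightarrow> 'a mpoly" where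
  "Dp i f = (\<Sum>m\<in>Poly_Mapping.keys f. Poly_Mapping.single 0 (Poly_Mapping.lookup f m) * Dm i m)"

lemma Dp_identity:
  fixes f :: "'a::field mpoly"
  shows "(var i - var (i+1)) * Dp i f = var (i+1) * (f - perm_poly (s i) f)"
proof -
  let ?c = "\<lambda>m. Poly_Mapping.single 0 (Poly_Mapping.lookup f m) :: 'a mpoly"
  have "(var i - var (i+1)) * Dp i f = (\<Sum>m\<in>Poly_Mapping.keys f. ?c m * ((var i - var (i+1)) * Dm i m))"
    unfolding Dp_def sum_distrib_left by (simp add: mult.left_commute)
  also have "\<dots> = (\<Sum>m\<in>Poly_Mapping.keys f. var (i+1) * (?c m * Poly_Mapping.single m 1 - ?c m * Poly_Mapping.single (perm_mono (s i) m) 1))"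
  proof (rule sum.cong[OF refl])
    fix m
    show "?c m * ((var i - var (i+1)) * Dm i m) = var (i+1) * (?c m * Poly_Mapping.single m 1 - ?c m * Poly_Mapping.single (perm_mono (s i) m) 1)"
      by (subst Dm_identity) (simp add: algebra_simps)
  qed
  also have "\<dots> = var (i+1) * ((\<Sum>m\<in>Poly_Mapping.keys f. ?c m * Poly_Mapping.single m 1) - (\<Sum>m\<in>Poly_Mapping.keys f. ?c m * Poly_Mapping.single (perm_mono (s i) m) 1))"
    unfolding sum_subtractf[symmetric] sum_distrib_left by (rule refl)
  also have "(\<Sum>m\<in>Poly_Mapping.keys f. ?c m * Poly_Mapping.single m 1) = f"
    using poly_expand[of f] by (simp add: mult_single)
  also have "(\<Sum>m\<in>Poly_Mapping.keys f. ?c m * Poly_Mapping.single (perm_mono (s i) m) 1) = perm_poly (s i) f"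
    using perm_poly_expand[of "s i" f] by simp
  finally show ?thesis .
qed

lemma var_diff_nonzero: "(var i - var (i+1) :: 'a::field mpoly) \<noteq> 0"
proof
  assume h: "(var i - var (i+1) :: 'a mpoly) = 0"
  have ne: "Poly_Mapping.single (i+1) (1::nat) \<noteq> Poly_Mapping.single i 1"
  proof
    assume "Poly_Mapping.single (i+1) (1::nat) = Poly_Mapping.single i 1"
    hence "Poly_Mapping.lookup (Poly_Mapping.single (i+1) (1::nat)) i = Poly_Mapping.lookup (Poly_Mapping.single i 1) i" by simp
    then show False by (simp add: lookup_single)
  qed
  have "Poly_Mapping.lookup (var i - var (i+1) :: 'a mpoly) (Poly_Mapping.single i 1) = 1"
    unfolding var_def using ne by (simp add: lookup_minus lookup_single when_def)
  with h show False by simp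
qed

lemma pibar_Dp: "pibar i f = Dp i (f :: 'a::field mpoly)"
  unfolding pibar_def
proof (rule the_equality)
  show "(var i - var (i+1)) * Dp i f = var (i+1) * (f - perm_poly (s i) f)" by (rule Dp_identity)
next
  fix g :: "'a mpoly"
  assume "(var i - var (i+1)) * g = var (i+1) * (f - perm_poly (s i) f)"
  hence "(var i - var (i+1)) * g = (var i - var (i+1)) * Dp i f" using Dp_identity by metis
  then show "g = Dp i f" using mult_left_cancel[OF var_diff_nonzero] by blast
qed

lemma lookup_Dp:
  "Poly_Mapping.lookup (Dp i f) y = (\<Sum>m\<in>Poly_Mapping.keys f. Poly_Mapping.lookup f m * Poly_Mapping.lookup (Dm i m :: 'a::field mpoly) y)"
  unfolding Dp_def by (simp add: lookup_sum lookup_smult)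

lemma keys_Dp: "Poly_Mapping.keys (Dp i (f::'a::field mpoly)) \<subseteq> (\<Union>m\<in>Poly_Mapping.keys f. Poly_Mapping.keys (Dm i m :: 'a mpoly))"
proof
  fix y assume "y \<in> Poly_Mapping.keys (Dp i f)"
  hence "Poly_Mapping.lookup (Dp i f) y \<noteq> 0" by (simp add: in_keys_iff)
  hence "(\<Sum>m\<in>Poly_Mapping.keys f. Poly_Mapping.lookup f m * Poly_Mapping.lookup (Dm i m :: 'a mpoly) y) \<noteq> 0"
    by (simp add: lookup_Dp)
  then obtain m where m: "m \<in> Poly_Mapping.keys f" "Poly_Mapping.lookup f m * Poly_Mapping.lookup (Dm i m :: 'a mpoly) y \<noteq> 0"
    using sum.not_neutral_contains_not_neutral by blast
  hence "Poly_Mapping.lookup (Dm i m :: 'a mpoly) y \<noteq> 0" by auto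
  with m(1) have "m \<in> Poly_Mapping.keys f" "Poly_Mapping.lookup (Dm i m :: 'a mpoly) y \<noteq> 0" by auto
  then show "y \<in> (\<Union>m\<in>Poly_Mapping.keys f. Poly_Mapping.keys (Dm i m :: 'a mpoly))"
    by (auto simp: in_keys_iff)
qed

lemma keys_sum_singles:
  "Poly_Mapping.keys (\<Sum>k\<in>K. Poly_Mapping.single (g k) (1::'a::field)) \<subseteq> g ` K"
proof
  fix y assume "y \<in> Poly_Mapping.keys (\<Sum>k\<in>K. Poly_Mapping.single (g k) (1::'a))"
  moreover have "Poly_Mapping.keys (\<Sum>k\<in>K. Poly_Mapping.single (g k) (1::'a)) \<subseteq> (\<Union>k\<in>K. Poly_Mapping.keys (Poly_Mapping.single (g k) (1::'a)))"
    by (rule keys_sum)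
  ultimately obtain k where k: "k \<in> K" "y \<in> Poly_Mapping.keys (Poly_Mapping.single (g k) (1::'a))"
    by blast
  have "Poly_Mapping.keys (Poly_Mapping.single (g k) (1::'a)) = {g k}" by simp
  then show "y \<in> g ` K" using k by simp
qed

lemma keys_Dm:
  assumes "y \<in> Poly_Mapping.keys (Dm i m :: 'a::field mpoly)"
  shows "\<exists>\<beta>. y = upd i m (Poly_Mapping.lookup m i + Poly_Mapping.lookup m (i+1) - \<beta>) \<beta> \<and>
     min (Poly_Mapping.lookup m i) (Poly_Mapping.lookup m (i+1)) < \<beta> \<and>
     \<beta> \<le> max (Poly_Mapping.lookup m i) (Poly_Mapping.lookup m (i+1))"
proof -
  define a where "a = Poly_Mapping.lookup m i"
  define b where "b = Poly_Mapping.lookup m (i+1)"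
  show ?thesis
  proof (cases "b < a")
    case True
    have "y \<in> Poly_Mapping.keys (\<Sum>k<a-b. Poly_Mapping.single (upd i m (a-1-k) (b+1+k)) (1::'a))"
      using assms True unfolding Dm_def a_def[symmetric] b_def[symmetric] Let_def by simp
    hence "y \<in> (\<lambda>k. upd i m (a-1-k) (b+1+k)) ` {..<a-b}"
      using keys_sum_singles[where g="\<lambda>k. upd i m (a-1-k) (b+1+k)" and K="{..<a-b}"] by blast
    then obtain k where k: "k < a - b" "y = upd i m (a-1-k) (b+1+k)" by auto
    have ar: "a + b - (b+1+k) = a-1-k" by simp
    have mm: "min a b = b" "max a b = a" using True by auto
    show ?thesis unfolding a_def[symmetric] b_def[symmetric]
    proof (intro exI[of _ "b+1+k"] conjI)
      show "y = upd i m (a + b - (b + 1 + k)) (b + 1 + k)" using k(2) ar by simp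
      show "min a b < b+1+k" using mm by simp
      show "b+1+k \<le> max a b" using mm k(1) by simp
    qed
  next
    case False
    have "y \<in> Poly_Mapping.keys (- (\<Sum>k<b-a. Poly_Mapping.single (upd i m (b-1-k) (a+1+k)) (1::'a)))"
      using assms False unfolding Dm_def a_def[symmetric] b_def[symmetric] Let_def by simp
    hence "y \<in> Poly_Mapping.keys (\<Sum>k<b-a. Poly_Mapping.single (upd i m (b-1-k) (a+1+k)) (1::'a))"
      by (simp add: in_keys_iff)
    hence "y \<in> (\<lambda>k. upd i m (b-1-k) (a+1+k)) ` {..<b-a}"
      using keys_sum_singles[where g="\<lambda>k. upd i m (b-1-k) (a+1+k)" and K="{..<b-a}"] by blast
    then obtain k where k: "k < b - a" "y = upd i m (b-1-k) (a+1+k)" by auto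
    have ar: "a + b - (a+1+k) = b-1-k" by simp
    have mm: "min a b = a" "max a b = b" using False by auto
    show ?thesis unfolding a_def[symmetric] b_def[symmetric]
    proof (intro exI[of _ "a+1+k"] conjI)
      show "y = upd i m (a + b - (a + 1 + k)) (a + 1 + k)" using k(2) ar by simp
      show "min a b < a+1+k" using mm by simp
      show "a+1+k \<le> max a b" using mm k(1) by simp
    qed
  qed
qed

lemma lookup_Dm_top:
  assumes "Poly_Mapping.lookup m (i+1) < Poly_Mapping.lookup m i"
  shows "Poly_Mapping.lookup (Dm i m :: 'a::field mpoly) (upd i m (Poly_Mapping.lookup m (i+1)) (Poly_Mapping.lookup m i)) = 1"
proof -
  define a where "a = Poly_Mapping.lookup m i"
  define b where "b = Poly_Mapping.lookup m (i+1)"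
  have ba: "b < a" using assms unfolding a_def b_def .
  have eqk: "\<And>k. k < a - b \<Longrightarrow> (upd i m (a-1-k) (b+1+k) = upd i m b a) \<longleftrightarrow> k = a - b - 1"
  proof -
    fix k assume k: "k < a - b"
    show "(upd i m (a-1-k) (b+1+k) = upd i m b a) \<longleftrightarrow> k = a - b - 1"
    proof
      assume "upd i m (a-1-k) (b+1+k) = upd i m b a"
      hence "Poly_Mapping.lookup (upd i m (a-1-k) (b+1+k)) (i+1) = Poly_Mapping.lookup (upd i m b a) (i+1)" by simp
      hence "b+1+k = a" by (simp add: lookup_upd)
      then show "k = a - b - 1" by simp
    next
      assume "k = a - b - 1"
      then show "upd i m (a-1-k) (b+1+k) = upd i m b a" using ba by (simp add: Suc_diff_le)
    qed
  qed
  have "Poly_Mapping.lookup (Dm i m :: 'a mpoly) (upd i m b a) =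
      (\<Sum>k<a-b. (if upd i m (a-1-k) (b+1+k) = upd i m b a then 1 else 0))"
    unfolding Dm_def a_def[symmetric] b_def[symmetric] Let_def using ba
    by (simp add: lookup_sum lookup_single when_def)
  also have "\<dots> = (\<Sum>k<a-b. (if k = a - b - 1 then (1::'a) else 0))"
    by (rule sum.cong) (use eqk in auto)
  also have "\<dots> = 1" using ba by simp
  finally show ?thesis unfolding a_def b_def .
qed


lemma pibar_word_Cons: "pibar_word (i # ws) f = pibar i (pibar_word ws f)"
  unfolding pibar_word_def by simp

lemma pibar_word_Nil: "pibar_word [] f = f"
  unfolding pibar_word_def by simp

lemma supp_perm_dm:
  assumes v: "v permutes {1..n}"
  shows "\<forall>j. j \<notin> {1..n} \<longrightarrow> Poly_Mapping.lookup (perm_mono v (dm n d)) j = 0"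
proof (intro allI impI)
  fix j assume j: "j \<notin> {1..n}"
  have "inv v j = j" using permutes_not_in[OF permutes_inv[OF v] j] .
  then have "Poly_Mapping.lookup (perm_mono v (dm n d)) j = Poly_Mapping.lookup (dm n d) j"
    by (simp add: lookup_perm_mono[OF permutes_bij[OF v]])
  also have "\<dots> = 0" using j by (simp only: lookup_dm if_False)
  finally show "Poly_Mapping.lookup (perm_mono v (dm n d)) j = 0" .
qed

lemma main_invariant:
  assumes dec: "\<And>i j. 1 \<le> i \<Longrightarrow> i \<le> j \<Longrightarrow> j \<le> n \<Longrightarrow> d j \<le> d i"
    and des: "Des_perm n w \<subseteq> Des_seq n d"
    and red: "reduced_word n w is"
  shows "is = pre @ suf \<Longrightarrow>
    word_perm suf permutes {1..n} \<and>
    Poly_Mapping.lookup (pibar_word suf (xpow n d) :: 'a::field mpoly) (perm_mono (word_perm suf) (dm n d)) = 1 \<and>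
    (\<forall>b\<in>Poly_Mapping.keys (pibar_word suf (xpow n d) :: 'a mpoly).
        Sset n (Poly_Mapping.lookup (perm_mono (word_perm suf) (dm n d))) (Poly_Mapping.lookup b))"
proof (induction suf arbitrary: pre)
  case Nil
  have pm: "perm_mono id (dm n d) = dm n d"
    by (rule poly_mapping_eqI) (simp add: lookup_perm_mono)
  have A: "Aset n (Poly_Mapping.lookup (dm n d)) (Poly_Mapping.lookup (dm n d))"
    unfolding Aset_def by (simp add: lookup_dm)
  have S: "Sset n (Poly_Mapping.lookup (dm n d)) (Poly_Mapping.lookup (dm n d))"
    unfolding Sset_def using A by (intro exI[of _ "[Poly_Mapping.lookup (dm n d)]"]) simp
  have w0: "word_perm [] = id" by simp
  have k0: "Poly_Mapping.keys (Poly_Mapping.single (dm n d) (1::'a)) = {dm n d}" by simp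
  show ?case unfolding w0 pibar_word_Nil xpow_single pm k0
  proof (intro conjI)
    show "id permutes {1..n}" by (rule permutes_id)
    show "Poly_Mapping.lookup (Poly_Mapping.single (dm n d) (1::'a)) (dm n d) = 1" by simp
    show "\<forall>b\<in>{dm n d}. Sset n (Poly_Mapping.lookup (dm n d)) (Poly_Mapping.lookup b)" using S by simp
  qed
next
  case (Cons i suf)
  define v where "v = word_perm suf"
  define f where "f = (pibar_word suf (xpow n d) :: 'a mpoly)"
  define E where "E = perm_mono v (dm n d)"
  define e where "e = Poly_Mapping.lookup E"
  have pre': "is = (pre @ [i]) @ suf" using Cons.prems by simp
  note IH0 = Cons.IH[OF pre']
  have IH: "v permutes {1..n}" "Poly_Mapping.lookup f E = 1"
    "\<forall>b\<in>Poly_Mapping.keys f. Sset n e (Poly_Mapping.lookup b)"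
    unfolding v_def f_def E_def e_def using IH0 by (blast, blast, blast)
  have G: "v permutes {1..n} \<and> 1 \<le> i \<and> i < n \<and> d (inv v (i+1)) < d (inv v i)"
    using good_split[OF dec des red Cons.prems] unfolding v_def .
  have i: "1 \<le> i" "i < n" using G by auto
  have vb: "bij v" using permutes_bij[OF IH(1)] .
  have inv_in: "\<And>x. x \<in> {1..n} \<Longrightarrow> inv v x \<in> {1..n}"
    using permutes_in_image[OF permutes_inv[OF IH(1)]] by blast
  have e_at: "\<And>x. x \<in> {1..n} \<Longrightarrow> e x = d (inv v x)"
    unfolding e_def E_def using inv_in by (simp add: lookup_perm_mono[OF vb] lookup_dm)
  have desc: "e (i+1) < e i" using G e_at[of i] e_at[of "i+1"] i by auto
  have esupp: "\<forall>j. j \<notin> {1..n} \<longrightarrow> e j = 0"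
    unfolding e_def E_def using supp_perm_dm[OF IH(1)] .
  define v' where "v' = s i \<circ> v"
  have v'p: "v' permutes {1..n}" unfolding v'_def using permutes_compose[OF IH(1) s_permutes[OF i]] .
  define E' where "E' = perm_mono v' (dm n d)"
  have lookE': "Poly_Mapping.lookup E' = sw i e"
  proof
    fix x
    have "inv v' = inv v \<circ> s i" unfolding v'_def using o_inv_distrib[OF bij_s vb] inv_s by simp
    then show "Poly_Mapping.lookup E' x = sw i e x"
      unfolding E'_def e_def E_def sw_def
      by (simp add: lookup_perm_mono[OF permutes_bij[OF v'p]] lookup_perm_mono[OF vb])
  qed
  have E'upd: "E' = upd i E (e (i+1)) (e i)"
    by (rule poly_mapping_eqI) (simp add: lookE' lookup_upd sw_apply e_def)
  have wp: "word_perm (i # suf) = v'" unfolding v'_def v_def by simp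
  have pw: "pibar_word (i # suf) (xpow n d) = (Dp i f :: 'a mpoly)"
    unfolding f_def by (simp add: pibar_word_Cons pibar_Dp)
  have step: "\<And>m c. m \<in> Poly_Mapping.keys f \<Longrightarrow> c \<in> Poly_Mapping.keys (Dm i m :: 'a mpoly) \<Longrightarrow>
      Sset n (sw i e) (Poly_Mapping.lookup c) \<and> (m \<noteq> E \<longrightarrow> c \<noteq> E')"
  proof -
    fix m c assume m: "m \<in> Poly_Mapping.keys f" and c: "c \<in> Poly_Mapping.keys (Dm i m :: 'a mpoly)"
    obtain \<beta> where \<beta>: "c = upd i m (Poly_Mapping.lookup m i + Poly_Mapping.lookup m (i+1) - \<beta>) \<beta>"
      "min (Poly_Mapping.lookup m i) (Poly_Mapping.lookup m (i+1)) < \<beta>"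
      "\<beta> \<le> max (Poly_Mapping.lookup m i) (Poly_Mapping.lookup m (i+1))"
      using keys_Dm[OF c] by blast
    have Sm: "Sset n e (Poly_Mapping.lookup m)" using IH(3) m by blast
    have cj: "\<forall>j. j \<noteq> i \<longrightarrow> j \<noteq> i+1 \<longrightarrow> Poly_Mapping.lookup c j = Poly_Mapping.lookup m j"
      unfolding \<beta>(1) by (simp add: lookup_upd)
    have ci1: "Poly_Mapping.lookup c (i+1) = \<beta>" unfolding \<beta>(1) by (simp add: lookup_upd)
    have ci: "Poly_Mapping.lookup c i = Poly_Mapping.lookup m i + Poly_Mapping.lookup m (i+1) - \<beta>"
      unfolding \<beta>(1) by (simp add: lookup_upd)
    have csum: "Poly_Mapping.lookup c i + Poly_Mapping.lookup c (i+1) = Poly_Mapping.lookup m i + Poly_Mapping.lookup m (i+1)"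
      using ci ci1 \<beta>(3) by simp
    have R: "Sset n (sw i e) (Poly_Mapping.lookup c) \<and> (Poly_Mapping.lookup m \<noteq> e \<longrightarrow> Poly_Mapping.lookup c \<noteq> sw i e)"
      using S_step[OF Sm i desc esupp cj csum] \<beta>(2,3) ci1 by simp
    show "Sset n (sw i e) (Poly_Mapping.lookup c) \<and> (m \<noteq> E \<longrightarrow> c \<noteq> E')"
    proof (intro conjI impI)
      show "Sset n (sw i e) (Poly_Mapping.lookup c)" using R by blast
      assume mE: "m \<noteq> E"
      have "Poly_Mapping.lookup m \<noteq> Poly_Mapping.lookup E"
      proof
        assume h: "Poly_Mapping.lookup m = Poly_Mapping.lookup E"
        have "m = E" unfolding poly_mapping_eq_iff by (rule h)
        with mE show False by contradiction
      qed
      hence "Poly_Mapping.lookup m \<noteq> e" unfolding e_def .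
      hence "Poly_Mapping.lookup c \<noteq> sw i e" using R by blast
      then show "c \<noteq> E'" using lookE' by auto
    qed
  qed
  have keysNew: "\<forall>b\<in>Poly_Mapping.keys (Dp i f :: 'a mpoly). Sset n (sw i e) (Poly_Mapping.lookup b)"
  proof
    fix b assume "b \<in> Poly_Mapping.keys (Dp i f :: 'a mpoly)"
    then obtain m where "m \<in> Poly_Mapping.keys f" "b \<in> Poly_Mapping.keys (Dm i m :: 'a mpoly)"
      using keys_Dp by blast
    then show "Sset n (sw i e) (Poly_Mapping.lookup b)" using step by blast
  qed
  have Ek: "E \<in> Poly_Mapping.keys f" using IH(2) by (simp add: in_keys_iff)
  have lookNew: "Poly_Mapping.lookup (Dp i f :: 'a mpoly) E' = 1"
  proof -
    have "Poly_Mapping.lookup (Dp i f :: 'a mpoly) E' =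
        (\<Sum>m\<in>Poly_Mapping.keys f. Poly_Mapping.lookup f m * Poly_Mapping.lookup (Dm i m :: 'a mpoly) E')"
      by (rule lookup_Dp)
    also have "\<dots> = Poly_Mapping.lookup f E * Poly_Mapping.lookup (Dm i E :: 'a mpoly) E'"
    proof -
      have fin: "finite (Poly_Mapping.keys f)" by simp
      have rest: "(\<Sum>m\<in>Poly_Mapping.keys f - {E}. Poly_Mapping.lookup f m * Poly_Mapping.lookup (Dm i m :: 'a mpoly) E') = 0"
      proof (rule sum.neutral, rule ballI)
        fix m assume "m \<in> Poly_Mapping.keys f - {E}"
        hence m: "m \<in> Poly_Mapping.keys f" "m \<noteq> E" by auto
        have "E' \<notin> Poly_Mapping.keys (Dm i m :: 'a mpoly)" using step[OF m(1)] m(2) by blast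
        then show "Poly_Mapping.lookup f m * Poly_Mapping.lookup (Dm i m :: 'a mpoly) E' = 0"
          by (simp add: in_keys_iff)
      qed
      show ?thesis using sum.remove[OF fin Ek, of "\<lambda>m. Poly_Mapping.lookup f m * Poly_Mapping.lookup (Dm i m :: 'a mpoly) E'"] rest by simp
    qed
    also have "Poly_Mapping.lookup (Dm i E :: 'a mpoly) E' = 1"
    proof -
      have "e (i+1) < e i" by (rule desc)
      hence "Poly_Mapping.lookup E (i+1) < Poly_Mapping.lookup E i" unfolding e_def .
      from lookup_Dm_top[OF this] show ?thesis unfolding E'upd e_def by simp
    qed
    finally show ?thesis using IH(2) by simp
  qed
  show ?case
  proof (intro conjI)
    show "word_perm (i # suf) permutes {1..n}" using wp v'p by simp
    show "Poly_Mapping.lookup (pibar_word (i # suf) (xpow n d) :: 'a mpoly) (perm_mono (word_perm (i # suf)) (dm n d)) = 1"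
      using lookNew pw wp unfolding E'_def by simp
    show "\<forall>b\<in>Poly_Mapping.keys (pibar_word (i # suf) (xpow n d) :: 'a mpoly).
        Sset n (Poly_Mapping.lookup (perm_mono (word_perm (i # suf)) (dm n d))) (Poly_Mapping.lookup b)"
      using keysNew pw wp lookE' unfolding E'_def by simp
  qed
qed

lemma nl_neglex: "nl (Poly_Mapping.lookup a) (Poly_Mapping.lookup b) \<longleftrightarrow> neglex_less a b"
  unfolding nl_def neglex_less_def by simp

lemma neglex_asym: "neglex_less a b \<Longrightarrow> \<not> neglex_less b a"
  using nl_asym nl_neglex by blast

theorem mainTheorem12:
  fixes n :: nat and d :: "nat \<Rightarrow> nat" and w :: "nat \<Rightarrow> nat" and "is" :: "nat list"
  assumes dec: "\<And>i j. 1 \<le> i \<Longrightarrow> i \<le> j \<Longrightarrow> j \<le> n \<Longrightarrow> d j \<le> d i"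
    and perm: "w permutes {1..n}"
    and des: "Des_perm n w \<subseteq> Des_seq n d"
    and red: "reduced_word n w is"
  shows "neglex_leading_term (pibar_word is (xpow n d :: 'a::field mpoly))
           = perm_poly w (xpow n d)"
proof -
  have wis: "word_perm is = w" using red unfolding reduced_word_def by simp
  define f where "f = (pibar_word is (xpow n d) :: 'a mpoly)"
  define E where "E = perm_mono w (dm n d)"
  have M: "Poly_Mapping.lookup f E = 1"
    "\<forall>b\<in>Poly_Mapping.keys f. Sset n (Poly_Mapping.lookup E) (Poly_Mapping.lookup b)"
    using main_invariant[OF dec des red, of "[]" "is", where 'a='a] wis unfolding f_def E_def by auto
  have esupp: "\<forall>j. j \<notin> {1..n} \<longrightarrow> Poly_Mapping.lookup E j = 0"
    unfolding E_def by (rule supp_perm_dm[OF perm])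
  have Ek: "E \<in> Poly_Mapping.keys f" using M(1) by (simp add: in_keys_iff)
  have less: "\<forall>m'\<in>Poly_Mapping.keys f. m' \<noteq> E \<longrightarrow> neglex_less m' E"
  proof (intro ballI impI)
    fix m' assume m': "m' \<in> Poly_Mapping.keys f" "m' \<noteq> E"
    have "Poly_Mapping.lookup m' = Poly_Mapping.lookup E \<or> nl (Poly_Mapping.lookup m') (Poly_Mapping.lookup E)"
      using S_le[OF _ esupp] M(2) m'(1) by blast
    moreover have "Poly_Mapping.lookup m' \<noteq> Poly_Mapping.lookup E"
    proof
      assume h: "Poly_Mapping.lookup m' = Poly_Mapping.lookup E"
      have "m' = E" unfolding poly_mapping_eq_iff by (rule h)
      with m'(2) show False by contradiction
    qed
    ultimately show "neglex_less m' E" using nl_neglex by blast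
  qed
  have lt: "neglex_leading_term f = Poly_Mapping.single E 1"
    unfolding neglex_leading_term_def
  proof (rule the_equality)
    show "\<exists>m. m \<in> Poly_Mapping.keys f \<and> (\<forall>m'\<in>Poly_Mapping.keys f. m' \<noteq> m \<longrightarrow> neglex_less m' m) \<and>
        Poly_Mapping.single E 1 = Poly_Mapping.single m (Poly_Mapping.lookup f m)"
      using Ek less M(1) by auto
  next
    fix t
    assume "\<exists>m. m \<in> Poly_Mapping.keys f \<and> (\<forall>m'\<in>Poly_Mapping.keys f. m' \<noteq> m \<longrightarrow> neglex_less m' m) \<and>
        t = Poly_Mapping.single m (Poly_Mapping.lookup f m)"
    then obtain m where m: "m \<in> Poly_Mapping.keys f" "\<forall>m'\<in>Poly_Mapping.keys f. m' \<noteq> m \<longrightarrow> neglex_less m' m"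
      "t = Poly_Mapping.single m (Poly_Mapping.lookup f m)" by blast
    have "m = E"
    proof (rule ccontr)
      assume ne: "m \<noteq> E"
      hence "neglex_less E m" using m(2) Ek by auto
      moreover have "neglex_less m E" using less m(1) ne by auto
      ultimately show False using neglex_asym by blast
    qed
    then show "t = Poly_Mapping.single E 1" using m(3) M(1) by simp
  qed
  have rhs: "perm_poly w (xpow n d :: 'a mpoly) = Poly_Mapping.single E 1"
    unfolding E_def by (simp add: xpow_single perm_poly_single)
  show ?thesis using lt rhs unfolding f_def by simp
qed

end
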